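(* Let $p,l$ be distinct odd primes and let $\Gamma=\psi(\tilde\Gamma)$ be the group described in the context. If $\Gamma_1$ and $\Gamma_2$ are maximal abelian subgroups of $\Gamma$ with $\Gamma_1\neq\Gamma_2$, then $\Gamma_1\cap\Gamma_2=\{1\}$.
   Context: Let $p,l$ be distinct odd primes. Let $\mathbb H(\mathbb Z)$ be the ring of quaternions $x=x_0+x_1i+x_2j+x_3k$ with $x_0,\dots,x_3\in\mathbb Z$, where $i^2=j^2=k^2=-1$, $ij=-ji=k$; write $|x|^2=x_0^2+x_1^2+x_2^2+x_3^2$. Fix $c_p,d_p\in\mathbb Q_p$ with $c_p^2+d_p^2+1=0$ and $c_l,d_l\in\mathbb Q_l$ with $c_l^2+d_l^2+1=0$. Define $\psi:\mathbb H(\mathbb Z)\setminus\{0\}\to G:=PGL_2(\mathbb Q_p)\times PGL_2(\mathbb Q_l)$ by sending $x$ to the class of the pair $\left(\begin{pmatrix} x_0+x_1c_p+x_3d_p & -x_1d_p+x_2+x_3c_p\\ -x_1d_p-x_2+x_3c_p & x_0-x_1c_p-x_3d_p\end{pmatrix},\begin{pmatrix} x_0+x_1c_l+x_3d_l & -x_1d_l+x_2+x_3c_l\\ -x_1d_l-x_2+x_3c_l & x_0-x_1c_l-x_3d_l\end{pmatrix}\right)$. Let $\tilde\Gamma$ be the set of $x\in\mathbb H(\mathbb Z)$ such that $|x|^2=p^rl^s$ for some integers $r,s\ge 0$, and such that $x_0$ is odd and $x_1,x_2,x_3$ are even if $|x|^2\equiv 1\pmod 4$, while $x_1$ is even and $x_0,x_2,x_3$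 are odd if $|x|^2\equiv 3\pmod 4$. Then $\Gamma=\psi(\tilde\Gamma)$ is a torsion-free cocompact lattice in $G$. *)

theory Defs
  imports "HOL-Analysis.Determinants" "HOL-Algebra.Group" "HOL-Computational_Algebra.Primes"
begin

text \<open>Integral Hamilton quaternions x0 + x1 i + x2 j + x3 k as integer 4-tuples.\<close>
type_synonym zquat = "int \<times> int \<times> int \<times> int"

definition qnorm :: "zquat \<Rightarrow> int" where
  "qnorm x = (case x of (x0, x1, x2, x3) \<Rightarrow> x0^2 + x1^2 + x2^2 + x3^2)"

definition Gamma_tilde :: "nat \<Rightarrow> nat \<Rightarrow> zquat set" where
  "Gamma_tilde p l = {(x0, x1, x2, x3).
     (\<exists>r s::nat. x0^2 + x1^2 + x2^2 + x3^2 = int p ^ r * int l ^ s) \<and>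
     ((x0^2 + x1^2 + x2^2 + x3^2) mod 4 = 1 \<longrightarrow> odd x0 \<and> even x1 \<and> even x2 \<and> even x3) \<and>
     ((x0^2 + x1^2 + x2^2 + x3^2) mod 4 = 3 \<longrightarrow> even x1 \<and> odd x0 \<and> odd x2 \<and> odd x3)}"

definition mat2 :: "'a \<Rightarrow> 'a \<Rightarrow> 'a \<Rightarrow> 'a \<Rightarrow> 'a ^ 2 ^ 2" where
  "mat2 a b c d = (\<chi> i j. if i = 1 then (if j = 1 then a else b) else (if j = 1 then c else d))"

text \<open>The matrix attached to a quaternion, given c, d with c^2 + d^2 + 1 = 0.\<close>
definition qmat :: "'a::field \<Rightarrow> 'a \<Rightarrow> zquat \<Rightarrow> 'a ^ 2 ^ 2" where
  "qmat c d x = (case x of (x0, x1, x2, x3) \<Rightarrow>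
     mat2 (of_int x0 + of_int x1 * c + of_int x3 * d)
          (- of_int x1 * d + of_int x2 + of_int x3 * c)
          (- of_int x1 * d - of_int x2 + of_int x3 * c)
          (of_int x0 - of_int x1 * c - of_int x3 * d))"

text \<open>Class of an invertible matrix in PGL_2: the set of its nonzero scalar multiples.\<close>
definition pgl_class :: "'a::field ^ 2 ^ 2 \<Rightarrow> ('a ^ 2 ^ 2) set" where
  "pgl_class A = {(\<chi> i j. t * A $ i $ j) | t. t \<noteq> 0}"

definition PGL2 :: "('a::field ^ 2 ^ 2) set monoid" where
  "PGL2 = \<lparr> carrier = {pgl_class A | A. det A \<noteq> 0},
            mult = (\<lambda>X Y. {a ** b | a b. a \<in> X \<and> b \<in> Y}),
            one = pgl_class (mat 1) \<rparr>"

definition Gpl :: "(('a::field ^ 2 ^ 2) set \<times> ('b::field ^ 2 ^ 2) set) monoid" where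
  "Gpl = PGL2 \<times>\<times> PGL2"

definition psi :: "'a::field \<Rightarrow> 'a \<Rightarrow> 'b::field \<Rightarrow> 'b \<Rightarrow> zquat
                    \<Rightarrow> ('a ^ 2 ^ 2) set \<times> ('b ^ 2 ^ 2) set" where
  "psi cp dp cl dl x = (pgl_class (qmat cp dp x), pgl_class (qmat cl dl x))"

definition Gamma :: "nat \<Rightarrow> nat \<Rightarrow> 'a::field \<Rightarrow> 'a \<Rightarrow> 'b::field \<Rightarrow> 'b
                     \<Rightarrow> (('a ^ 2 ^ 2) set \<times> ('b ^ 2 ^ 2) set) set" where
  "Gamma p l cp dp cl dl = psi cp dp cl dl ` Gamma_tilde p l"

definition GammaGrp :: "nat \<Rightarrow> nat \<Rightarrow> 'a::field \<Rightarrow> 'a \<Rightarrow> 'b::field \<Rightarrow> 'b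
                     \<Rightarrow> (('a ^ 2 ^ 2) set \<times> ('b ^ 2 ^ 2) set) monoid" where
  "GammaGrp p l cp dp cl dl = Gpl \<lparr> carrier := Gamma p l cp dp cl dl \<rparr>"

definition abelian_subgroup :: "'g set \<Rightarrow> ('g, 'm) monoid_scheme \<Rightarrow> bool" where
  "abelian_subgroup H G \<longleftrightarrow> subgroup H G \<and>
     (\<forall>x\<in>H. \<forall>y\<in>H. x \<otimes>\<^bsub>G\<^esub> y = y \<otimes>\<^bsub>G\<^esub> x)"

definition maximal_abelian_subgroup :: "'g set \<Rightarrow> ('g, 'm) monoid_scheme \<Rightarrow> bool" where
  "maximal_abelian_subgroup H G \<longleftrightarrow> abelian_subgroup H G \<and>
     (\<forall>K. abelian_subgroup K G \<and> H \<subseteq> K \<longrightarrow> K = H)"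

end

theory Submission imports Defs begin

definition qmul :: "zquat \<Rightarrow> zquat \<Rightarrow> zquat" where
  "qmul x y = (case x of (a0,a1,a2,a3) \<Rightarrow> case y of (b0,b1,b2,b3) \<Rightarrow>
     (a0*b0 - a1*b1 - a2*b2 - a3*b3, a0*b1 + a1*b0 + a2*b3 - a3*b2,
      a0*b2 - a1*b3 + a2*b0 + a3*b1, a0*b3 + a1*b2 - a2*b1 + a3*b0))"

definition smul :: "'a::field \<Rightarrow> 'a^2^2 \<Rightarrow> 'a^2^2" where
  "smul t A = (\<chi> i j. t * A $ i $ j)"

lemma mat2_nth: "mat2 a b c d $ 1 $ 1 = a" "mat2 a b c d $ 1 $ 2 = b"
  "mat2 a b c d $ 2 $ 1 = c" "mat2 a b c d $ 2 $ 2 = d"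
  by (simp_all add: mat2_def)

lemma mat2_eq: "(A::'a^2^2) = B \<longleftrightarrow> A$1$1 = B$1$1 \<and> A$1$2 = B$1$2 \<and> A$2$1 = B$2$1 \<and> A$2$2 = B$2$2"
  by (auto simp: vec_eq_iff forall_2)

lemma mat2_mult: "mat2 a b c d ** mat2 a' b' c' d' =
   mat2 (a*a'+b*c') (a*b'+b*d') (c*a'+d*c') (c*b'+d*d'::'a::comm_ring_1)"
  by (simp add: mat2_eq matrix_matrix_mult_def sum_2 mat2_nth)

lemma qmat_mul:
  fixes c d :: "'a::field"
  assumes h: "c^2 + d^2 + 1 = 0"
  shows "qmat c d (qmul x y) = qmat c d x ** qmat c d y"
proof -
  obtain a0 a1 a2 a3 where x: "x = (a0,a1,a2,a3)" by (cases x) auto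
  obtain b0 b1 b2 b3 where y: "y = (b0,b1,b2,b3)" by (cases y) auto
  show ?thesis unfolding x y qmat_def qmul_def
    apply (simp add: mat2_mult mat2_eq mat2_nth)
    using h by algebra
qed

lemma det_qmat:
  fixes c d :: "'a::field"
  assumes h: "c^2 + d^2 + 1 = 0"
  shows "det (qmat c d x) = of_int (qnorm x)"
proof -
  obtain a0 a1 a2 a3 where x: "x = (a0,a1,a2,a3)" by (cases x) auto
  show ?thesis unfolding x qmat_def qnorm_def
    apply (simp add: det_2 mat2_nth)
    using h by algebra
qed

lemma smul_mult: "smul s A ** smul t B = smul (s*t) (A ** B)"
  by (simp add: smul_def vec_eq_iff matrix_matrix_mult_def sum_distrib_left mult_ac)

lemma pgl_class_smul: "pgl_class A = {smul t A | t. t \<noteq> 0}"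
  by (simp add: pgl_class_def smul_def)

lemma pgl_mult: "{a ** b | a b. a \<in> pgl_class A \<and> b \<in> pgl_class B} = pgl_class (A ** B)"
proof
  show "{a ** b | a b. a \<in> pgl_class A \<and> b \<in> pgl_class B} \<subseteq> pgl_class (A ** B)"
    unfolding pgl_class_smul by (auto simp: smul_mult)
next
  show "pgl_class (A ** B) \<subseteq> {a ** b | a b. a \<in> pgl_class A \<and> b \<in> pgl_class B}"
  proof
    fix X assume "X \<in> pgl_class (A ** B)"
    then obtain t where t: "t \<noteq> 0" "X = smul t (A ** B)" unfolding pgl_class_smul by auto
    have "X = smul t A ** smul 1 B" using t by (simp add: smul_mult)
    moreover have "smul t A \<in> pgl_class A" "smul 1 B \<in> pgl_class B"
      using t unfolding pgl_class_smul by auto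
    ultimately show "X \<in> {a ** b | a b. a \<in> pgl_class A \<and> b \<in> pgl_class B}" by blast
  qed
qed

definition qconj :: "zquat \<Rightarrow> zquat" where
  "qconj x = (case x of (a0,a1,a2,a3) \<Rightarrow> (a0,-a1,-a2,-a3))"

definition qtyp :: "zquat \<Rightarrow> bool" where
  "qtyp x = (case x of (x0,x1,x2,x3) \<Rightarrow>
     (odd x0 \<and> even x1 \<and> even x2 \<and> even x3) \<or> (even x1 \<and> odd x0 \<and> odd x2 \<and> odd x3))"

lemma odd_pow_prod: "odd p \<Longrightarrow> odd l \<Longrightarrow> odd (int p ^ r * int l ^ s)"
  by simp

lemma odd_mod4: "odd (n::int) \<Longrightarrow> n mod 4 = 1 \<or> n mod 4 = 3"
  by presburger

lemma mod4_1: "(4*m+1) mod 4 = (1::int)" by presburger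
lemma mod4_3: "(4*m+3) mod 4 = (3::int)" by presburger

lemma typeA_mod:
  assumes "odd x0" "even x1" "even x2" "even x3"
  shows "((x0::int)^2+x1^2+x2^2+x3^2) mod 4 = 1"
proof -
  obtain a where a: "x0 = 2*a+1" using assms(1) oddE by blast
  obtain b where b: "x1 = 2*b" using assms(2) by blast
  obtain c where c: "x2 = 2*c" using assms(3) by blast
  obtain d where d: "x3 = 2*d" using assms(4) by blast
  have "x0^2+x1^2+x2^2+x3^2 = 4*(a*a+a+b*b+c*c+d*d)+1"
    unfolding a b c d by (simp add: power2_eq_square algebra_simps)
  then show ?thesis by (simp only: mod4_1)
qed

lemma typeB_mod:
  assumes "odd x0" "even x1" "odd x2" "odd x3"
  shows "((x0::int)^2+x1^2+x2^2+x3^2) mod 4 = 3"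
proof -
  obtain a where a: "x0 = 2*a+1" using assms(1) oddE by blast
  obtain b where b: "x1 = 2*b" using assms(2) by blast
  obtain c where c: "x2 = 2*c+1" using assms(3) oddE by blast
  obtain d where d: "x3 = 2*d+1" using assms(4) oddE by blast
  have "x0^2+x1^2+x2^2+x3^2 = 4*(a*a+a+b*b+c*c+c+d*d+d)+3"
    unfolding a b c d by (simp add: power2_eq_square algebra_simps)
  then show ?thesis by (simp only: mod4_3)
qed

lemma Gamma_tilde_iff:
  assumes "odd p" "odd l"
  shows "x \<in> Gamma_tilde p l \<longleftrightarrow> (\<exists>r s::nat. qnorm x = int p ^ r * int l ^ s) \<and> qtyp x"
proof -
  obtain x0 x1 x2 x3 where x: "x = (x0,x1,x2,x3)" by (cases x) auto
  have G: "x \<in> Gamma_tilde p l \<longleftrightarrow>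
     (\<exists>r s::nat. x0^2 + x1^2 + x2^2 + x3^2 = int p ^ r * int l ^ s) \<and>
     ((x0^2 + x1^2 + x2^2 + x3^2) mod 4 = 1 \<longrightarrow> odd x0 \<and> even x1 \<and> even x2 \<and> even x3) \<and>
     ((x0^2 + x1^2 + x2^2 + x3^2) mod 4 = 3 \<longrightarrow> even x1 \<and> odd x0 \<and> odd x2 \<and> odd x3)"
    unfolding Gamma_tilde_def x by simp
  have Q: "qtyp x \<longleftrightarrow> (odd x0 \<and> even x1 \<and> even x2 \<and> even x3) \<or> (even x1 \<and> odd x0 \<and> odd x2 \<and> odd x3)"
    unfolding qtyp_def x by simp
  have N: "qnorm x = x0^2 + x1^2 + x2^2 + x3^2" unfolding qnorm_def x by simp
  show ?thesis
  proof
    assume h: "x \<in> Gamma_tilde p l"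
    then obtain r s where n: "x0^2 + x1^2 + x2^2 + x3^2 = int p ^ r * int l ^ s"
      using G by blast
    have "odd (x0^2 + x1^2 + x2^2 + x3^2)" unfolding n using assms by simp
    then have "(x0^2 + x1^2 + x2^2 + x3^2) mod 4 = 1 \<or> (x0^2 + x1^2 + x2^2 + x3^2) mod 4 = 3"
      by (rule odd_mod4)
    then have "qtyp x" using h G Q by blast
    then show "(\<exists>r s::nat. qnorm x = int p ^ r * int l ^ s) \<and> qtyp x"
      using n N by metis
  next
    assume h: "(\<exists>r s::nat. qnorm x = int p ^ r * int l ^ s) \<and> qtyp x"
    then have e: "\<exists>r s::nat. x0^2 + x1^2 + x2^2 + x3^2 = int p ^ r * int l ^ s" using N by simp
    from h Q have "(odd x0 \<and> even x1 \<and> even x2 \<and> even x3) \<or> (even x1 \<and> odd x0 \<and> odd x2 \<and> odd x3)"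
      by blast
    then show "x \<in> Gamma_tilde p l"
    proof
      assume A: "odd x0 \<and> even x1 \<and> even x2 \<and> even x3"
      then have "(x0^2 + x1^2 + x2^2 + x3^2) mod 4 = 1" using typeA_mod by blast
      then show ?thesis using G e A by simp
    next
      assume B: "even x1 \<and> odd x0 \<and> odd x2 \<and> odd x3"
      then have "(x0^2 + x1^2 + x2^2 + x3^2) mod 4 = 3" using typeB_mod by blast
      then show ?thesis using G e B by simp
    qed
  qed
qed

lemma qnorm_mul: "qnorm (qmul x y) = qnorm x * qnorm y"
  by (cases x; cases y) (simp add: qnorm_def qmul_def power2_eq_square algebra_simps)

lemma qtyp_mul: "qtyp x \<Longrightarrow> qtyp y \<Longrightarrow> qtyp (qmul x y)"
  by (cases x; cases y) (auto simp: qtyp_def qmul_def)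

lemma qtyp_conj: "qtyp x \<Longrightarrow> qtyp (qconj x)"
  by (cases x) (auto simp: qtyp_def qconj_def)

lemma qnorm_conj: "qnorm (qconj x) = qnorm x"
  by (cases x) (simp add: qnorm_def qconj_def)

lemma Gt_mul:
  assumes "odd p" "odd l" "x \<in> Gamma_tilde p l" "y \<in> Gamma_tilde p l"
  shows "qmul x y \<in> Gamma_tilde p l"
proof -
  obtain r s r' s' where "qnorm x = int p ^ r * int l ^ s" "qnorm y = int p ^ r' * int l ^ s'"
    "qtyp x" "qtyp y" using assms Gamma_tilde_iff by metis
  then have "qnorm (qmul x y) = int p ^ (r+r') * int l ^ (s+s')" "qtyp (qmul x y)"
    by (simp_all add: qnorm_mul power_add qtyp_mul mult_ac)
  then show ?thesis using Gamma_tilde_iff assms by blast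
qed

lemma Gt_conj:
  assumes "odd p" "odd l" "x \<in> Gamma_tilde p l"
  shows "qconj x \<in> Gamma_tilde p l"
  using assms Gamma_tilde_iff qnorm_conj qtyp_conj by metis

lemma Gt_one: "odd p \<Longrightarrow> odd l \<Longrightarrow> (1,0,0,0) \<in> Gamma_tilde p l"
  by (subst Gamma_tilde_iff) (auto simp: qnorm_def qtyp_def intro!: exI[of _ 0])

lemma Gt_props:
  assumes "odd p" "odd l" "x \<in> Gamma_tilde p l"
  shows "odd (fst x)" "qnorm x > 0"
proof -
  obtain r s where n: "qnorm x = int p ^ r * int l ^ s" "qtyp x" using assms Gamma_tilde_iff by metis
  then show "odd (fst x)" by (cases x) (auto simp: qtyp_def)
  have "int p > 0" "int l > 0" using assms by (auto intro!: Nat.gr0I)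
  then show "qnorm x > 0" using n by simp
qed

lemma qmat_scalar: "qmat c d (n,0,0,0) = smul (of_int n) (mat 1)"
  by (simp add: qmat_def smul_def mat2_def vec_eq_iff forall_2 mat_def)

lemma smul_1: "smul 1 A = A"
  by (simp add: smul_def vec_eq_iff)

lemma smul_smul: "smul s (smul t A) = smul (s*t) A"
  by (simp add: smul_def vec_eq_iff mult_ac)

lemma pgl_class_smul_eq: "(t::'a::field) \<noteq> 0 \<Longrightarrow> pgl_class (smul t A) = pgl_class A"
proof -
  assume t: "t \<noteq> 0"
  have "\<exists>tb. smul ta A = smul (tb * t) A \<and> tb \<noteq> 0" if "ta \<noteq> 0" for ta
    using t that by (intro exI[of _ "ta/t"]) simp
  then show ?thesis using t unfolding pgl_class_smul smul_smul
    by auto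
qed

lemma qmul_conj: "qmul (qconj x) x = (qnorm x, 0, 0, 0)"
  by (cases x) (simp add: qmul_def qconj_def qnorm_def power2_eq_square algebra_simps)

lemma qmul_one: "qmul (1,0,0,0) x = x"
  by (cases x) (simp add: qmul_def)

lemma qmul_assoc: "qmul (qmul x y) z = qmul x (qmul y z)"
  by (cases x; cases y; cases z) (simp add: qmul_def algebra_simps)

lemma Gpl_mult: "(a, b) \<otimes>\<^bsub>Gpl\<^esub> (a', b') = ({x ** y | x y. x \<in> a \<and> y \<in> a'}, {x ** y | x y. x \<in> b \<and> y \<in> b'})"
  by (simp add: Gpl_def PGL2_def)

lemma Gpl_one: "\<one>\<^bsub>Gpl\<^esub> = (pgl_class (mat 1), pgl_class (mat 1))"
  by (simp add: Gpl_def PGL2_def)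

lemma psi_mul:
  fixes cp dp :: "'a::field" and cl dl :: "'b::field"
  assumes "cp^2 + dp^2 + 1 = 0" "cl^2 + dl^2 + 1 = 0"
  shows "psi cp dp cl dl x \<otimes>\<^bsub>Gpl\<^esub> psi cp dp cl dl y = psi cp dp cl dl (qmul x y)"
  unfolding psi_def Gpl_mult pgl_mult qmat_mul[OF assms(1)] qmat_mul[OF assms(2)] ..

lemma psi_scalar:
  fixes cp dp :: "'a::field_char_0" and cl dl :: "'b::field_char_0"
  assumes "n \<noteq> 0"
  shows "psi cp dp cl dl (n,0,0,0) = \<one>\<^bsub>Gpl\<^esub>"
  using assms by (simp add: psi_def Gpl_one qmat_scalar pgl_class_smul_eq)

lemma GammaGrp_group:
  fixes cp dp :: "'a::field_char_0" and cl dl :: "'b::field_char_0"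
  assumes "odd p" "odd l" "cp^2 + dp^2 + 1 = 0" "cl^2 + dl^2 + 1 = 0"
  shows "group (GammaGrp p l cp dp cl dl)"
proof -
  let ?G = "GammaGrp p l cp dp cl dl"
  let ?psi = "psi cp dp cl dl"
  have car: "carrier ?G = ?psi ` Gamma_tilde p l" by (simp add: GammaGrp_def Gamma_def)
  have mul: "?psi x \<otimes>\<^bsub>?G\<^esub> ?psi y = ?psi (qmul x y)" for x y
    using psi_mul[OF assms(3,4)] by (simp add: GammaGrp_def)
  have one: "\<one>\<^bsub>?G\<^esub> = ?psi (1,0,0,0)"
    by (simp add: GammaGrp_def psi_scalar[where n=1])
  show ?thesis
  proof (rule groupI)
    fix a b assume "a \<in> carrier ?G" "b \<in> carrier ?G"
    then show "a \<otimes>\<^bsub>?G\<^esub> b \<in> carrier ?G"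
      unfolding car using mul Gt_mul[OF assms(1,2)] by auto
  next
    show "\<one>\<^bsub>?G\<^esub> \<in> carrier ?G" unfolding car one using Gt_one[OF assms(1,2)] by auto
  next
    fix a b c assume "a \<in> carrier ?G" "b \<in> carrier ?G" "c \<in> carrier ?G"
    then show "a \<otimes>\<^bsub>?G\<^esub> b \<otimes>\<^bsub>?G\<^esub> c = a \<otimes>\<^bsub>?G\<^esub> (b \<otimes>\<^bsub>?G\<^esub> c)"
      unfolding car by (auto simp: mul qmul_assoc)
  next
    fix a assume "a \<in> carrier ?G"
    then show "\<one>\<^bsub>?G\<^esub> \<otimes>\<^bsub>?G\<^esub> a = a" unfolding car one by (auto simp: mul qmul_one)
  next
    fix a assume "a \<in> carrier ?G"
    then obtain x where x: "x \<in> Gamma_tilde p l" "a = ?psi x" unfolding car by auto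
    have "qnorm x \<noteq> 0" using Gt_props[OF assms(1,2) x(1)] by simp
    then have "?psi (qconj x) \<otimes>\<^bsub>?G\<^esub> a = \<one>\<^bsub>?G\<^esub>"
      unfolding x mul qmul_conj using psi_scalar[of "qnorm x"] by (simp add: GammaGrp_def)
    moreover have "?psi (qconj x) \<in> carrier ?G" unfolding car using Gt_conj[OF assms(1,2) x(1)] by auto
    ultimately show "\<exists>b\<in>carrier ?G. b \<otimes>\<^bsub>?G\<^esub> a = \<one>\<^bsub>?G\<^esub>" by blast
  qed
qed


lemma par:
  fixes a :: int
  assumes "a \<noteq> 0" "a*yi = xi*yk" "a*yj = xj*yk" "a*zi = xi*zk" "a*zj = xj*zk"
  shows "yi*zj = yj*zi"
proof -
  have "a*a*(yi*zj) = (a*yi)*(a*zj)" by (simp add: algebra_simps)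
  also have "\<dots> = (xi*yk)*(xj*zk)" using assms by simp
  also have "\<dots> = (xj*yk)*(xi*zk)" by (simp add: algebra_simps)
  also have "\<dots> = (a*yj)*(a*zi)" using assms by simp
  also have "\<dots> = a*a*(yj*zi)" by (simp add: algebra_simps)
  finally show ?thesis using assms(1) by simp
qed

lemma qcomm_iff:
  "qmul (x0,x1,x2,x3) (y0,y1,y2,y3) = qmul (y0,y1,y2,y3) (x0,x1,x2,x3) \<longleftrightarrow>
   (x2*y3 = x3*y2 \<and> x3*y1 = x1*y3 \<and> x1*y2 = x2*y1)"
  by (simp add: qmul_def algebra_simps)

lemma cross:
  fixes x1 x2 x3 y1 y2 y3 z1 z2 z3 :: int
  assumes nz: "\<not> (x1 = 0 \<and> x2 = 0 \<and> x3 = 0)"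
    and hy: "x2*y3 = x3*y2" "x3*y1 = x1*y3" "x1*y2 = x2*y1"
    and hz: "x2*z3 = x3*z2" "x3*z1 = x1*z3" "x1*z2 = x2*z1"
  shows "y2*z3 = y3*z2 \<and> y3*z1 = y1*z3 \<and> y1*z2 = y2*z1"
proof -
  have c1: ?thesis if "x1 \<noteq> 0"
  proof (intro conjI)
    show "y2*z3 = y3*z2"
      by (rule par[where a="x1" and xi="x2" and xj="x3" and yk="y1" and zk="z1"])
         (use that hy hz in \<open>simp_all add: mult.commute\<close>)
  next
    show "y3*z1 = y1*z3"
      by (rule par[where a="x1" and xi="x3" and xj="x1" and yk="y1" and zk="z1"])
         (use that hy hz in \<open>simp_all add: mult.commute\<close>)
  next
    show "y1*z2 = y2*z1"
      by (rule par[where a="x1" and xi="x1" and xj="x2" and yk="y1" and zk="z1"])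
         (use that hy hz in \<open>simp_all add: mult.commute\<close>)
  qed
  have c2: ?thesis if "x2 \<noteq> 0"
  proof (intro conjI)
    show "y2*z3 = y3*z2"
      by (rule par[where a="x2" and xi="x2" and xj="x3" and yk="y2" and zk="z2"])
         (use that hy hz in \<open>simp_all add: mult.commute\<close>)
  next
    show "y3*z1 = y1*z3"
      by (rule par[where a="x2" and xi="x3" and xj="x1" and yk="y2" and zk="z2"])
         (use that hy hz in \<open>simp_all add: mult.commute\<close>)
  next
    show "y1*z2 = y2*z1"
      by (rule par[where a="x2" and xi="x1" and xj="x2" and yk="y2" and zk="z2"])
         (use that hy hz in \<open>simp_all add: mult.commute\<close>)
  qed
  have c3: ?thesis if "x3 \<noteq> 0"
  proof (intro conjI)
    show "y2*z3 = y3*z2"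
      by (rule par[where a="x3" and xi="x2" and xj="x3" and yk="y3" and zk="z3"])
         (use that hy hz in \<open>simp_all add: mult.commute\<close>)
  next
    show "y3*z1 = y1*z3"
      by (rule par[where a="x3" and xi="x3" and xj="x1" and yk="y3" and zk="z3"])
         (use that hy hz in \<open>simp_all add: mult.commute\<close>)
  next
    show "y1*z2 = y2*z1"
      by (rule par[where a="x3" and xi="x1" and xj="x2" and yk="y3" and zk="z3"])
         (use that hy hz in \<open>simp_all add: mult.commute\<close>)
  qed
  show ?thesis using nz c1 c2 c3 by blast
qed

definition qneg :: "zquat \<Rightarrow> zquat" where
  "qneg x = (case x of (a0,a1,a2,a3) \<Rightarrow> (-a0,-a1,-a2,-a3))"

lemma qmat_neg: "qmat c d (qneg x) = smul (-1) (qmat c d x)"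
  by (cases x) (simp add: qmat_def qneg_def smul_def mat2_eq mat2_nth algebra_simps)

lemma det_smul: "det (smul t (A::'a::field^2^2)) = t^2 * det A"
  by (simp add: det_2 smul_def power2_eq_square algebra_simps)

lemma qmat_inj:
  fixes c d :: "'a::field_char_0"
  assumes h: "c^2 + d^2 + 1 = 0" and e: "qmat c d u = qmat c d v"
  shows "u = v"
proof -
  obtain u0 u1 u2 u3 where u: "u = (u0,u1,u2,u3)" by (cases u) auto
  obtain v0 v1 v2 v3 where v: "v = (v0,v1,v2,v3)" by (cases v) auto
  let ?a = "of_int (u1 - v1) :: 'a" and ?b = "of_int (u3 - v3) :: 'a"
  have E: "of_int u0 + of_int u1 * c + of_int u3 * d = (of_int v0 + of_int v1 * c + of_int v3 * d :: 'a)"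
    "- of_int u1 * d + of_int u2 + of_int u3 * c = (- of_int v1 * d + of_int v2 + of_int v3 * c :: 'a)"
    "- of_int u1 * d - of_int u2 + of_int u3 * c = (- of_int v1 * d - of_int v2 + of_int v3 * c :: 'a)"
    "of_int u0 - of_int u1 * c - of_int u3 * d = (of_int v0 - of_int v1 * c - of_int v3 * d :: 'a)"
    using e unfolding u v qmat_def by (simp_all add: mat2_eq mat2_nth)
  have "(of_int u0 + of_int u1 * c + of_int u3 * d) + (of_int u0 - of_int u1 * c - of_int u3 * d)
      = (of_int v0 + of_int v1 * c + of_int v3 * d) + (of_int v0 - of_int v1 * c - of_int v3 * d :: 'a)"
    using E(1) E(4) by simp
  then have "(of_int (2 * u0) :: 'a) = of_int (2 * v0)" by (simp add: algebra_simps)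
  then have 0: "u0 = v0" by (simp only: of_int_eq_iff)
  have "(- of_int u1 * d + of_int u2 + of_int u3 * c) - (- of_int u1 * d - of_int u2 + of_int u3 * c)
      = (- of_int v1 * d + of_int v2 + of_int v3 * c) - (- of_int v1 * d - of_int v2 + of_int v3 * c :: 'a)"
    using E(2) E(3) by simp
  then have "(of_int (2 * u2) :: 'a) = of_int (2 * v2)" by (simp add: algebra_simps)
  then have 2: "u2 = v2" by (simp only: of_int_eq_iff)
  have e1: "?a * c + ?b * d = 0" using E(1) 0 by (simp add: algebra_simps)
  have e2: "- ?a * d + ?b * c = 0" using E(2) 2 by (simp add: algebra_simps)
  have "?a = - (c * (?a * c + ?b * d) - d * (- ?a * d + ?b * c))"
    using h by algebra
  then have "?a = 0" using e1 e2 by simp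
  then have 1: "u1 = v1" by simp
  have "?b = - (d * (?a * c + ?b * d) + c * (- ?a * d + ?b * c))"
    using h by algebra
  then have "?b = 0" using e1 e2 by simp
  then have 3: "u3 = v3" by simp
  show ?thesis using 0 1 2 3 u v by simp
qed

lemma anti:
  assumes "odd (fst y)" "qnorm x > 0" "qmul y x = qneg (qmul x y)"
  shows False
proof -
  obtain x0 x1 x2 x3 where x: "x = (x0,x1,x2,x3)" by (cases x) auto
  obtain y0 y1 y2 y3 where y: "y = (y0,y1,y2,y3)" by (cases y) auto
  have E: "x0*y0 - x1*y1 - x2*y2 - x3*y3 = 0" "x0*y1 + y0*x1 = 0" "x0*y2 + y0*x2 = 0" "x0*y3 + y0*x3 = 0"
    using assms(3) unfolding x y qmul_def qneg_def by (simp_all add: algebra_simps)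
  have "y0 * qnorm x = x0*(x0*y0 - x1*y1 - x2*y2 - x3*y3) + x1*(x0*y1 + y0*x1) + x2*(x0*y2 + y0*x2) + x3*(x0*y3 + y0*x3)"
    unfolding x qnorm_def by (simp add: algebra_simps power2_eq_square)
  then have "y0 * qnorm x = 0" using E by simp
  moreover have "y0 \<noteq> 0" using assms(1) y by auto
  ultimately show False using assms(2) by simp
qed

lemma pgl_class_eqD: "pgl_class A = pgl_class B \<Longrightarrow> \<exists>t. t \<noteq> 0 \<and> B = smul t A"
proof -
  assume "pgl_class A = pgl_class B"
  moreover have "B \<in> pgl_class B" unfolding pgl_class_smul by (auto intro!: exI[of _ 1] simp: smul_1)
  ultimately show ?thesis unfolding pgl_class_smul by auto
qed

lemma commute_psi:
  fixes cp dp :: "'a::field_char_0" and cl dl :: "'b::field_char_0"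
  assumes "odd p" "odd l" "cp^2 + dp^2 + 1 = 0" "cl^2 + dl^2 + 1 = 0"
    and x: "x \<in> Gamma_tilde p l" and y: "y \<in> Gamma_tilde p l"
    and c: "psi cp dp cl dl x \<otimes>\<^bsub>Gpl\<^esub> psi cp dp cl dl y = psi cp dp cl dl y \<otimes>\<^bsub>Gpl\<^esub> psi cp dp cl dl x"
  shows "qmul x y = qmul y x"
proof -
  have "pgl_class (qmat cp dp (qmul x y)) = pgl_class (qmat cp dp (qmul y x))"
  proof -
    have "psi cp dp cl dl (qmul x y) = psi cp dp cl dl (qmul y x)"
      using c by (simp only: psi_mul[OF assms(3,4)])
    then show ?thesis by (simp add: psi_def)
  qed
  then obtain t where t: "t \<noteq> 0" "qmat cp dp (qmul y x) = smul t (qmat cp dp (qmul x y))"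
    using pgl_class_eqD by blast
  have "of_int (qnorm (qmul y x)) = t^2 * (of_int (qnorm (qmul x y)) :: 'a)"
    using arg_cong[OF t(2), of det] unfolding det_smul det_qmat[OF assms(3)] .
  moreover have "qnorm (qmul y x) = qnorm (qmul x y)" "qnorm (qmul x y) \<noteq> 0"
    using Gt_props[OF assms(1,2) x] Gt_props[OF assms(1,2) y] by (simp_all add: qnorm_mul)
  ultimately have "t^2 = 1" by simp
  then have "t = 1 \<or> t = -1" by (simp add: power2_eq_1_iff)
  then show ?thesis
  proof
    assume "t = 1"
    then show ?thesis using t qmat_inj[OF assms(3)] by (simp add: smul_1)
  next
    assume "t = -1"
    then have "qmul y x = qneg (qmul x y)" using t qmat_inj[OF assms(3)] by (simp add: qmat_neg)
    then show ?thesis using anti Gt_props[OF assms(1,2) x] Gt_props[OF assms(1,2) y] by blast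
  qed
qed

lemma key:
  fixes cp dp :: "'a::field_char_0" and cl dl :: "'b::field_char_0"
  assumes "odd p" "odd l" and h: "cp^2 + dp^2 + 1 = 0" "cl^2 + dl^2 + 1 = 0"
    and g: "g \<in> carrier (GammaGrp p l cp dp cl dl)" "g \<noteq> \<one>\<^bsub>GammaGrp p l cp dp cl dl\<^esub>"
    and a: "a \<in> carrier (GammaGrp p l cp dp cl dl)"
    and b: "b \<in> carrier (GammaGrp p l cp dp cl dl)"
    and ag: "a \<otimes>\<^bsub>GammaGrp p l cp dp cl dl\<^esub> g = g \<otimes>\<^bsub>GammaGrp p l cp dp cl dl\<^esub> a"
    and bg: "b \<otimes>\<^bsub>GammaGrp p l cp dp cl dl\<^esub> g = g \<otimes>\<^bsub>GammaGrp p l cp dp cl dl\<^esub> b"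
  shows "a \<otimes>\<^bsub>GammaGrp p l cp dp cl dl\<^esub> b = b \<otimes>\<^bsub>GammaGrp p l cp dp cl dl\<^esub> a"
proof -
  let ?psi = "psi cp dp cl dl"
  have car: "carrier (GammaGrp p l cp dp cl dl) = ?psi ` Gamma_tilde p l" by (simp add: GammaGrp_def Gamma_def)
  have mul: "u \<otimes>\<^bsub>GammaGrp p l cp dp cl dl\<^esub> v = u \<otimes>\<^bsub>Gpl\<^esub> v" for u v by (simp add: GammaGrp_def)
  obtain x where x: "x \<in> Gamma_tilde p l" "g = ?psi x" using g car by auto
  obtain y where y: "y \<in> Gamma_tilde p l" "a = ?psi y" using a car by auto
  obtain z where z: "z \<in> Gamma_tilde p l" "b = ?psi z" using b car by auto
  obtain x0 x1 x2 x3 where xx: "x = (x0,x1,x2,x3)" by (cases x) auto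
  obtain y0 y1 y2 y3 where yy: "y = (y0,y1,y2,y3)" by (cases y) auto
  obtain z0 z1 z2 z3 where zz: "z = (z0,z1,z2,z3)" by (cases z) auto
  have nz: "\<not> (x1 = 0 \<and> x2 = 0 \<and> x3 = 0)"
  proof
    assume "x1 = 0 \<and> x2 = 0 \<and> x3 = 0"
    moreover have "x0 \<noteq> 0" using Gt_props(1)[OF assms(1,2) x(1)] xx by auto
    ultimately have "g = \<one>\<^bsub>Gpl\<^esub>" using x(2) xx psi_scalar by simp
    then show False using g(2) by (simp add: GammaGrp_def)
  qed
  have "qmul x y = qmul y x"
    using commute_psi[OF assms(1,2) h x(1) y(1)] ag x y by (simp add: mul)
  then have hy: "x2*y3 = x3*y2" "x3*y1 = x1*y3" "x1*y2 = x2*y1"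
    unfolding xx yy qcomm_iff by auto
  have "qmul x z = qmul z x"
    using commute_psi[OF assms(1,2) h x(1) z(1)] bg x z by (simp add: mul)
  then have hz: "x2*z3 = x3*z2" "x3*z1 = x1*z3" "x1*z2 = x2*z1"
    unfolding xx zz qcomm_iff by auto
  have "qmul y z = qmul z y" unfolding yy zz qcomm_iff using cross[OF nz hy hz] .
  then show ?thesis using y z by (simp add: mul psi_mul[OF h])
qed

theorem lemma2p4:
  fixes p l :: nat
    and cp dp :: "'a::field_char_0" and cl dl :: "'b::field_char_0"
    and \<Gamma>1 \<Gamma>2 :: "(('a ^ 2 ^ 2) set \<times> ('b ^ 2 ^ 2) set) set"
  assumes "prime p" and "prime l" and "odd p" and "odd l" and "p \<noteq> l"
    and "cp^2 + dp^2 + 1 = 0" and "cl^2 + dl^2 + 1 = 0"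
    and "maximal_abelian_subgroup \<Gamma>1 (GammaGrp p l cp dp cl dl)"
    and "maximal_abelian_subgroup \<Gamma>2 (GammaGrp p l cp dp cl dl)"
    and "\<Gamma>1 \<noteq> \<Gamma>2"
  shows "\<Gamma>1 \<inter> \<Gamma>2 = {\<one>\<^bsub>GammaGrp p l cp dp cl dl\<^esub>}"
proof -
  let ?G = "GammaGrp p l cp dp cl dl"
  interpret G: group ?G using GammaGrp_group assms(3,4,6,7) by blast
  have s1: "subgroup \<Gamma>1 ?G" and ab1: "\<forall>x\<in>\<Gamma>1. \<forall>y\<in>\<Gamma>1. x \<otimes>\<^bsub>?G\<^esub> y = y \<otimes>\<^bsub>?G\<^esub> x"
    and mx1: "\<forall>K. abelian_subgroup K ?G \<and> \<Gamma>1 \<subseteq> K \<longrightarrow> K = \<Gamma>1"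
    using assms(8) unfolding maximal_abelian_subgroup_def abelian_subgroup_def by auto
  have s2: "subgroup \<Gamma>2 ?G" and ab2: "\<forall>x\<in>\<Gamma>2. \<forall>y\<in>\<Gamma>2. x \<otimes>\<^bsub>?G\<^esub> y = y \<otimes>\<^bsub>?G\<^esub> x"
    and mx2: "\<forall>K. abelian_subgroup K ?G \<and> \<Gamma>2 \<subseteq> K \<longrightarrow> K = \<Gamma>2"
    using assms(9) unfolding maximal_abelian_subgroup_def abelian_subgroup_def by auto
  have one: "\<one>\<^bsub>?G\<^esub> \<in> \<Gamma>1 \<inter> \<Gamma>2" using subgroup.one_closed[OF s1] subgroup.one_closed[OF s2] by blast
  have "g = \<one>\<^bsub>?G\<^esub>" if g: "g \<in> \<Gamma>1 \<inter> \<Gamma>2" for g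
  proof (rule ccontr)
    assume gn: "g \<noteq> \<one>\<^bsub>?G\<^esub>"
    have gc: "g \<in> carrier ?G" using g subgroup.subset[OF s1] by blast
    define C where "C = {h \<in> carrier ?G. h \<otimes>\<^bsub>?G\<^esub> g = g \<otimes>\<^bsub>?G\<^esub> h}"
    have sC: "subgroup C ?G"
    proof (rule G.subgroupI)
      show "C \<subseteq> carrier ?G" unfolding C_def by blast
      show "C \<noteq> {}" using gc unfolding C_def by blast
    next
      fix a assume "a \<in> C"
      then have a: "a \<in> carrier ?G" "a \<otimes>\<^bsub>?G\<^esub> g = g \<otimes>\<^bsub>?G\<^esub> a" unfolding C_def by auto
      have "inv\<^bsub>?G\<^esub> a \<otimes>\<^bsub>?G\<^esub> g = inv\<^bsub>?G\<^esub> a \<otimes>\<^bsub>?G\<^esub> (g \<otimes>\<^bsub>?G\<^esub> a) \<otimes>\<^bsub>?G\<^esub> inv\<^bsub>?G\<^esub> a"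
        using a gc by (simp add: G.m_assoc)
      also have "\<dots> = inv\<^bsub>?G\<^esub> a \<otimes>\<^bsub>?G\<^esub> (a \<otimes>\<^bsub>?G\<^esub> g) \<otimes>\<^bsub>?G\<^esub> inv\<^bsub>?G\<^esub> a"
        using a(2) by simp
      also have "\<dots> = g \<otimes>\<^bsub>?G\<^esub> inv\<^bsub>?G\<^esub> a"
        using a(1) gc by (simp add: G.m_assoc[symmetric])
      finally show "inv\<^bsub>?G\<^esub> a \<in> C" using a unfolding C_def by auto
    next
      fix a b assume "a \<in> C" "b \<in> C"
      then have a: "a \<in> carrier ?G" "a \<otimes>\<^bsub>?G\<^esub> g = g \<otimes>\<^bsub>?G\<^esub> a"
        and b: "b \<in> carrier ?G" "b \<otimes>\<^bsub>?G\<^esub> g = g \<otimes>\<^bsub>?G\<^esub> b" unfolding C_def by auto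
      have "a \<otimes>\<^bsub>?G\<^esub> b \<otimes>\<^bsub>?G\<^esub> g = a \<otimes>\<^bsub>?G\<^esub> g \<otimes>\<^bsub>?G\<^esub> b"
        using a(1) b(1) gc by (simp add: b(2) G.m_assoc)
      also have "\<dots> = g \<otimes>\<^bsub>?G\<^esub> (a \<otimes>\<^bsub>?G\<^esub> b)"
        using a(1) b(1) gc by (simp add: a(2) G.m_assoc)
      finally show "a \<otimes>\<^bsub>?G\<^esub> b \<in> C" using a b unfolding C_def by auto
    qed
    have aC: "abelian_subgroup C ?G"
      unfolding abelian_subgroup_def using sC key[OF assms(3,4,6,7) gc gn] unfolding C_def by blast
    have "\<Gamma>1 \<subseteq> C" using subgroup.subset[OF s1] ab1 g unfolding C_def by blast
    then have "C = \<Gamma>1" using mx1 aC by blast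
    moreover have "\<Gamma>2 \<subseteq> C" using subgroup.subset[OF s2] ab2 g unfolding C_def by blast
    then have "C = \<Gamma>2" using mx2 aC by blast
    ultimately show False using assms(10) by simp
  qed
  then show ?thesis using one by blast
qed

end
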